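(* With the conventions $A_0=1$, $B_0=0$, the tiling numbers satisfy, for all $n\ge2$, $$A_{2n}=6A_{2n-2}-A_{2n-4}-2,\qquad A_{2n+1}=6A_{2n-1}-A_{2n-3}+2\ (n\ge2),$$ $$B_{2n}=6B_{2n-2}-B_{2n-4}+2,\qquad B_{2n+1}=6B_{2n-1}-B_{2n-3}-2\ (n\ge2).$$
   Context: Let $s=\sqrt3/2$. Consider the standard triangular lattice in the plane whose vertices are the points $(a+b/2,\,bs)$ with $a,b\in\mathbb Z$ and whose edges are the unit segments joining lattice points in the directions $0^\circ,60^\circ,120^\circ$; it divides the plane into unit equilateral triangles called cells. A small tile is a single cell; a large tile is an equilateral triangle of side $2$ whose vertices are lattice points (so it is a union of $4$ cells; it may point up or down). For a region $R$ that is a finite union of cells, a tiling of $R$ is a finite set of small and large tiles, each contained in $R$, with pairwise disjoint interiors and union equal to $R$. For $n\ge1$, $A_n$ is the parallelogram with vertices $(0,0),(n,0),(n+1,2s),(1,2s)$ and $B_n$ is the trapezoid with vertices $(0,0),(n+1,0),(n,2s),(1,2s)$ (for $n=1$ it is a triangle of side $2$); each consists of $4n$ cells. By abuse of notation, $A_n$ and $B_n$ also denote the number of tilings of these regions. *)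

theory Defs
  imports Main
begin

text \<open>Lattice coordinates: the lattice point (a,b) is (a + b/2, b*sqrt 3/2).
  Up cell (a,b): triangle with vertices (a,b),(a+1,b),(a,b+1).
  Down cell (a,b): triangle with vertices (a+1,b),(a,b+1),(a+1,b+1).\<close>

datatype cell = Up int int | Down int int

definition large_up :: "int \<Rightarrow> int \<Rightarrow> cell set" where
  "large_up a b = {Up a b, Up (a+1) b, Up a (b+1), Down a b}"

definition large_down :: "int \<Rightarrow> int \<Rightarrow> cell set" where
  "large_down a b = {Down (a+1) b, Down a (b+1), Down (a+1) (b+1), Up (a+1) (b+1)}"

definition tiles :: "cell set set" where
  "tiles = {{c} | c. True} \<union> {large_up a b | a b. True} \<union> {large_down a b | a b. True}"

definition is_tiling :: "cell set \<Rightarrow> cell set set \<Rightarrow> bool" where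
  "is_tiling R T \<longleftrightarrow> finite T \<and> T \<subseteq> tiles \<and> (\<forall>t\<in>T. t \<subseteq> R)
     \<and> (\<forall>t\<in>T. \<forall>t'\<in>T. t \<noteq> t' \<longrightarrow> t \<inter> t' = {}) \<and> \<Union>T = R"

definition num_tilings :: "cell set \<Rightarrow> nat" where
  "num_tilings R = card {T. is_tiling R T}"

text \<open>Parallelogram A_n: lattice vertices (0,0),(n,0),(n,2),(0,2).\<close>
definition regionA :: "nat \<Rightarrow> cell set" where
  "regionA n = {Up a b | a b. 0 \<le> a \<and> a < int n \<and> 0 \<le> b \<and> b \<le> 1}
             \<union> {Down a b | a b. 0 \<le> a \<and> a < int n \<and> 0 \<le> b \<and> b \<le> 1}"

text \<open>Trapezoid B_n: lattice vertices (0,0),(n+1,0),(n-1,2),(0,2).\<close>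
definition regionB :: "nat \<Rightarrow> cell set" where
  "regionB n = {Up a 0 | a. 0 \<le> a \<and> a \<le> int n} \<union> {Down a 0 | a. 0 \<le> a \<and> a < int n}
             \<union> {Up a 1 | a. 0 \<le> a \<and> a < int n} \<union> {Down a 1 | a. 0 \<le> a \<and> a < int n - 1}"

definition A :: "nat \<Rightarrow> int" where
  "A n = (if n = 0 then 1 else int (num_tilings (regionA n)))"

definition B :: "nat \<Rightarrow> int" where
  "B n = (if n = 0 then 0 else int (num_tilings (regionB n)))"

end

theory Submission
  imports Defs
begin


lemma tiles_nonempty: "t \<in> tiles \<Longrightarrow> t \<noteq> {}"
  by (auto simp: tiles_def large_up_def large_down_def)

lemma tilings_finite:
  assumes "finite R" shows "finite {T. is_tiling R T}"
proof -
  have "{T. is_tiling R T} \<subseteq> Pow (Pow R)" by (auto simp: is_tiling_def)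
  thus ?thesis by (rule finite_subset) (simp add: assms)
qed

lemma tiling_insert:
  assumes "is_tiling (R - t) T" "t \<in> tiles" "t \<subseteq> R"
  shows "is_tiling R (insert t T)"
proof -
  have f: "finite T" and s: "T \<subseteq> tiles" and sub: "\<forall>x\<in>T. x \<subseteq> R - t"
    and d: "\<forall>x\<in>T. \<forall>y\<in>T. x \<noteq> y \<longrightarrow> x \<inter> y = {}" and u: "\<Union>T = R - t"
    using assms(1) unfolding is_tiling_def by auto
  have d2: "\<forall>x\<in>insert t T. \<forall>y\<in>insert t T. x \<noteq> y \<longrightarrow> x \<inter> y = {}"
    using d sub by blast
  have u2: "\<Union>(insert t T) = R" using u assms(3) by blast
  show ?thesis unfolding is_tiling_def using f s sub d2 u2 assms(2,3) by auto
qed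

lemma tiling_remove:
  assumes "is_tiling R T" "t \<in> T"
  shows "is_tiling (R - t) (T - {t})"
  using assms unfolding is_tiling_def by blast

lemma peel:
  assumes fin: "finite R" and c: "c \<in> R"
  shows "num_tilings R = (\<Sum>t\<in>{t\<in>tiles. c \<in> t \<and> t \<subseteq> R}. num_tilings (R - t))"
proof -
  let ?C = "{t\<in>tiles. c \<in> t \<and> t \<subseteq> R}"
  have finC: "finite ?C"
    by (rule finite_subset[of _ "Pow R"]) (use fin in auto)
  have eq: "{T. is_tiling R T} = (\<Union>t\<in>?C. insert t ` {T. is_tiling (R - t) T})"
  proof (rule set_eqI, rule iffI)
    fix T assume "T \<in> {T. is_tiling R T}"
    hence T: "is_tiling R T" by simp
    then obtain t where t: "t \<in> T" "c \<in> t" using c unfolding is_tiling_def by blast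
    have "t \<in> ?C" using T t unfolding is_tiling_def by blast
    moreover have "T = insert t (T - {t})" using t by blast
    moreover have "is_tiling (R - t) (T - {t})" using tiling_remove[OF T t(1)] .
    ultimately show "T \<in> (\<Union>t\<in>?C. insert t ` {T. is_tiling (R - t) T})" by blast
  next
    fix T assume "T \<in> (\<Union>t\<in>?C. insert t ` {T. is_tiling (R - t) T})"
    then show "T \<in> {T. is_tiling R T}" using tiling_insert by blast
  qed
  have card_each: "card (insert t ` {T. is_tiling (R - t) T}) = num_tilings (R - t)" if "t \<in> ?C" for t
  proof -
    have "inj_on (insert t) {T. is_tiling (R - t) T}"
    proof (rule inj_onI)
      fix X Y assume X: "X \<in> {T. is_tiling (R - t) T}" and Y: "Y \<in> {T. is_tiling (R - t) T}"
        and XY: "insert t X = insert t Y"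
      have ne: "t \<noteq> {}" using that tiles_nonempty by blast
      have "t \<notin> X" using X ne that unfolding is_tiling_def by blast
      moreover have "t \<notin> Y" using Y ne that unfolding is_tiling_def by blast
      ultimately show "X = Y" using XY by (metis insert_ident)
    qed
    thus ?thesis unfolding num_tilings_def by (simp add: card_image)
  qed
  have "num_tilings R = card (\<Union>t\<in>?C. insert t ` {T. is_tiling (R - t) T})"
    unfolding num_tilings_def using eq by simp
  also have "\<dots> = (\<Sum>t\<in>?C. card (insert t ` {T. is_tiling (R - t) T}))"
  proof (rule card_UN_disjoint[OF finC])
    show "\<forall>i\<in>?C. finite (insert i ` {T. is_tiling (R - i) T})"
      using tilings_finite fin by auto
    show "\<forall>i\<in>?C. \<forall>j\<in>?C. i \<noteq> j \<longrightarrow>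
      insert i ` {T. is_tiling (R - i) T} \<inter> insert j ` {T. is_tiling (R - j) T} = {}"
    proof (intro ballI impI)
      fix i j assume i: "i \<in> ?C" and j: "j \<in> ?C" and ij: "i \<noteq> j"
      show "insert i ` {T. is_tiling (R - i) T} \<inter> insert j ` {T. is_tiling (R - j) T} = {}"
      proof (rule ccontr)
        assume "\<not> ?thesis"
        then obtain X Y where X: "is_tiling (R - i) X" and Y: "is_tiling (R - j) Y"
          and XY: "insert i X = insert j Y" by blast
        have "i \<in> Y" using XY ij by blast
        hence "i \<subseteq> R - j" using Y unfolding is_tiling_def by blast
        thus False using i j by blast
      qed
    qed
  qed
  also have "\<dots> = (\<Sum>t\<in>?C. num_tilings (R - t))"
    by (rule sum.cong) (auto simp: card_each)
  finally show ?thesis .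
qed

definition nbhd :: "cell \<Rightarrow> cell set set" where
  "nbhd c = (case c of Up a b \<Rightarrow> {{Up a b}, large_up a b, large_up (a-1) b, large_up a (b-1), large_down (a-1) (b-1)}
     | Down a b \<Rightarrow> {{Down a b}, large_up a b, large_down (a-1) b, large_down a (b-1), large_down (a-1) (b-1)})"

lemma lu_mem: "c \<in> large_up a b \<Longrightarrow> large_up a b \<in> nbhd c"
  unfolding large_up_def nbhd_def by (auto simp: algebra_simps)

lemma ld_mem: "c \<in> large_down a b \<Longrightarrow> large_down a b \<in> nbhd c"
  unfolding large_down_def nbhd_def by (auto simp: algebra_simps)

lemma lu_tile[simp]: "large_up a b \<in> tiles" unfolding tiles_def by blast
lemma ld_tile[simp]: "large_down a b \<in> tiles" unfolding tiles_def by blast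
lemma single_tile[simp]: "{c} \<in> tiles" unfolding tiles_def by blast

lemma nbhd_sub: "t \<in> nbhd c \<Longrightarrow> t \<in> tiles \<and> c \<in> t"
proof -
  assume a: "t \<in> nbhd c"
  have "t \<in> tiles" using a unfolding nbhd_def by (cases c) auto
  moreover have "c \<in> t" using a unfolding nbhd_def by (cases c) (auto simp: large_up_def large_down_def)
  ultimately show ?thesis by blast
qed

lemma tiles_cases: "t \<in> tiles \<Longrightarrow> (\<And>c. t = {c} \<Longrightarrow> P) \<Longrightarrow> (\<And>a b. t = large_up a b \<Longrightarrow> P)
   \<Longrightarrow> (\<And>a b. t = large_down a b \<Longrightarrow> P) \<Longrightarrow> P"
  unfolding tiles_def by blast

lemma single_mem: "c \<in> {c'} \<Longrightarrow> {c'} \<in> nbhd c"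
  unfolding nbhd_def by (cases c) auto

lemma tiles_at: "{t\<in>tiles. c \<in> t} = nbhd c"
proof
  show "{t\<in>tiles. c \<in> t} \<subseteq> nbhd c"
  proof
    fix t assume "t \<in> {t\<in>tiles. c \<in> t}"
    hence t: "t \<in> tiles" "c \<in> t" by auto
    from t(1) show "t \<in> nbhd c"
      by (rule tiles_cases) (use t(2) single_mem lu_mem ld_mem in auto)
  qed
  show "nbhd c \<subseteq> {t\<in>tiles. c \<in> t}" using nbhd_sub by blast
qed



definition S :: "int \<Rightarrow> int \<Rightarrow> cell set" where
  "S r0 r1 = {c. case c of Up a b \<Rightarrow> 0 \<le> a \<and> ((b=0 \<and> 2*a < r0) \<or> (b=1 \<and> 2*a+1 < r1))
       | Down a b \<Rightarrow> 0 \<le> a \<and> ((b=0 \<and> 2*a+1 < r0) \<or> (b=1 \<and> 2*a+2 < r1))}"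

lemma mem_S_Up[simp]: "Up a b \<in> S r0 r1 \<longleftrightarrow> 0 \<le> a \<and> ((b=0 \<and> 2*a < r0) \<or> (b=1 \<and> 2*a+1 < r1))"
  by (simp add: S_def)
lemma mem_S_Down[simp]: "Down a b \<in> S r0 r1 \<longleftrightarrow> 0 \<le> a \<and> ((b=0 \<and> 2*a+1 < r0) \<or> (b=1 \<and> 2*a+2 < r1))"
  by (simp add: S_def)

lemma finite_S: "finite (S r0 r1)"
proof -
  let ?I = "{0..\<bar>r0\<bar>+\<bar>r1\<bar>} \<times> {0..1::int}"
  have "S r0 r1 \<subseteq> (\<lambda>(a,b). Up a b) ` ?I \<union> (\<lambda>(a,b). Down a b) ` ?I"
  proof
    fix x assume x: "x \<in> S r0 r1"
    show "x \<in> (\<lambda>(a,b). Up a b) ` ?I \<union> (\<lambda>(a,b). Down a b) ` ?I"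
    proof (cases x)
      case (Up a b)
      have "(a,b) \<in> ?I" using x Up by auto
      thus ?thesis using Up by force
    next
      case (Down a b)
      have "(a,b) \<in> ?I" using x Down by auto
      thus ?thesis using Down by force
    qed
  qed
  thus ?thesis by (rule finite_subset) auto
qed

lemma finite_S_ins: "finite (insert c (S r0 r1))" using finite_S by simp

lemma peel_nbhd:
  assumes "finite R" "c \<in> R"
  shows "num_tilings R = (\<Sum>t\<in>{t\<in>nbhd c. t \<subseteq> R}. num_tilings (R - t))"
proof -
  have "{t\<in>tiles. c \<in> t \<and> t \<subseteq> R} = {t\<in>nbhd c. t \<subseteq> R}"
    using tiles_at[of c] by blast
  thus ?thesis using peel[OF assms] by simp
qed

lemma filter5: "{t \<in> {x1,x2,x3,x4,x5}. P t} =
   (if P x1 then {x1} else {}) \<union> (if P x2 then {x2} else {}) \<union> (if P x3 then {x3} else {})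
   \<union> (if P x4 then {x4} else {}) \<union> (if P x5 then {x5} else {})"
  by auto

lemma single_ne_ld[simp]: "{c} \<noteq> large_down a b"
proof
  assume "{c} = large_down a b"
  hence "Down (a+1) b \<in> {c}" "Down a (b+1) \<in> {c}" by (auto simp: large_down_def)
  thus False by auto
qed

lemma single_ne_lu[simp]: "{c} \<noteq> large_up a b"
proof
  assume "{c} = large_up a b"
  hence "Up a b \<in> {c}" "Down a b \<in> {c}" by (auto simp: large_up_def)
  thus False by auto
qed

definition N :: "int \<Rightarrow> int \<Rightarrow> nat" where "N r0 r1 = num_tilings (S r0 r1)"

lemma tilings_empty: "num_tilings {} = 1"
proof -
  have "{T. is_tiling {} T} = {{}}"
  proof (rule set_eqI, rule iffI)
    fix T assume "T \<in> {T. is_tiling {} T}"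
    hence "T \<subseteq> tiles" "\<Union>T = {}" by (auto simp: is_tiling_def)
    thus "T \<in> {{}}" using tiles_nonempty by blast
  qed (auto simp: is_tiling_def)
  thus ?thesis unfolding num_tilings_def by simp
qed

lemma sum2: "a \<noteq> b \<Longrightarrow> (\<Sum>t\<in>{a,b}. f t) = f a + (f b :: nat)" by simp

lemma R1:
  assumes k: "k \<ge> 2"
  shows "N (2*k) (2*k+1) = N (2*k-1) (2*k-2) + N (2*k) (2*k)"
proof -
  let ?R = "S (2*k) (2*k+1)" and ?c = "Down (k-1) 1"
  have C: "{t\<in>nbhd ?c. t \<subseteq> ?R} = {{?c}, large_down (k-2) 0}"
    unfolding nbhd_def cell.case filter5 using k
    by (simp add: large_up_def large_down_def insert_commute)
  have e1: "?R - {?c} = S (2*k) (2*k)"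
    apply (rule set_eqI) subgoal for x using k by (cases x) (simp_all, (presburger+)?) done
  have e2: "?R - large_down (k-2) 0 = S (2*k-1) (2*k-2)"
    apply (rule set_eqI) subgoal for x using k by (cases x) (simp_all add: large_down_def, (presburger+)?) done
  have "N (2*k) (2*k+1) = (\<Sum>t\<in>{{?c}, large_down (k-2) 0}. num_tilings (?R - t))"
    unfolding N_def using peel_nbhd[OF finite_S, of ?c] C k by simp
  also have "\<dots> = N (2*k) (2*k) + N (2*k-1) (2*k-2)"
    by (simp add: e1 e2 N_def)
  finally show ?thesis by simp
qed

lemma R1b: "N 2 3 = N 2 2"
proof -
  let ?R = "S 2 3" and ?c = "Down 0 1"
  have C: "{t\<in>nbhd ?c. t \<subseteq> ?R} = {{?c}}"
    unfolding nbhd_def cell.case filter5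
    by (simp add: large_up_def large_down_def)
  have e1: "?R - {?c} = S 2 2"
    apply (rule set_eqI) subgoal for x by (cases x) (simp_all, (presburger+)?) done
  show ?thesis
    unfolding N_def using peel_nbhd[OF finite_S, of ?c ] C e1 by simp
qed

lemma R2:
  assumes k: "k \<ge> 1"
  shows "N (2*k+1) (2*k) = N (2*k) (2*k) + N (2*k-2) (2*k-1)"
proof -
  let ?R = "S (2*k+1) (2*k)" and ?c = "Up k 0"
  have C: "{t\<in>nbhd ?c. t \<subseteq> ?R} = {{?c}, large_up (k-1) 0}"
    unfolding nbhd_def cell.case filter5 using k
    by (simp add: large_up_def large_down_def insert_commute)
  have e1: "?R - {?c} = S (2*k) (2*k)"
    apply (rule set_eqI) subgoal for x using k by (cases x) (simp_all, (presburger+)?) done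
  have e2: "?R - large_up (k-1) 0 = S (2*k-2) (2*k-1)"
    apply (rule set_eqI) subgoal for x using k by (cases x) (simp_all add: large_up_def, (presburger+)?) done
  have "N (2*k+1) (2*k) = (\<Sum>t\<in>{{?c}, large_up (k-1) 0}. num_tilings (?R - t))"
    unfolding N_def using peel_nbhd[OF finite_S, of ?c] C k by simp
  also have "\<dots> = N (2*k) (2*k) + N (2*k-2) (2*k-1)"
    by (simp add: e1 e2 N_def)
  finally show ?thesis by simp
qed

lemma R3:
  assumes k: "k \<ge> 1"
  shows "N (2*k) (2*k) = N (2*k) (2*k-1)"
proof -
  let ?R = "S (2*k) (2*k)" and ?c = "Up (k-1) 1"
  have C: "{t\<in>nbhd ?c. t \<subseteq> ?R} = {{?c}}"
    unfolding nbhd_def cell.case filter5 using k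
    by (simp add: large_up_def large_down_def)
  have e1: "?R - {?c} = S (2*k) (2*k-1)"
    apply (rule set_eqI) subgoal for x using k by (cases x) (simp_all, (presburger+)?) done
  show ?thesis
    unfolding N_def using peel_nbhd[OF finite_S, of ?c ] C e1 k by simp
qed

lemma R4:
  assumes k: "k \<ge> 1"
  shows "N (2*k) (2*k-1) = N (2*k-1) (2*k-1)"
proof -
  let ?R = "S (2*k) (2*k-1)" and ?c = "Down (k-1) 0"
  have C: "{t\<in>nbhd ?c. t \<subseteq> ?R} = {{?c}}"
    unfolding nbhd_def cell.case filter5 using k
    by (simp add: large_up_def large_down_def)
  have e1: "?R - {?c} = S (2*k-1) (2*k-1)"
    apply (rule set_eqI) subgoal for x using k by (cases x) (simp_all, (presburger+)?) done
  show ?thesis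
    unfolding N_def using peel_nbhd[OF finite_S, of ?c ] C e1 k by simp
qed

lemma R5:
  assumes k: "k \<ge> 2"
  shows "N (2*k+1) (2*k+1) = N (2*k+1) (2*k) + N (2*k-1) (2*k-2)"
proof -
  let ?R = "S (2*k+1) (2*k+1)" and ?c = "Down (k-1) 1"
  let ?X = "insert (Up k 0) (S (2*k-1) (2*k-2))"
  have C: "{t\<in>nbhd ?c. t \<subseteq> ?R} = {{?c}, large_down (k-2) 0}"
    unfolding nbhd_def cell.case filter5 using k
    by (simp add: large_up_def large_down_def insert_commute)
  have e1: "?R - {?c} = S (2*k+1) (2*k)"
    apply (rule set_eqI) subgoal for x using k by (cases x) (simp_all, (presburger+)?) done
  have e2: "?R - large_down (k-2) 0 = ?X"
    apply (rule set_eqI) subgoal for x using k by (cases x) (simp_all add: large_down_def, (presburger+)?) done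
  have CX: "{t\<in>nbhd (Up k 0). t \<subseteq> ?X} = {{Up k 0}}"
    unfolding nbhd_def cell.case filter5 using k
    by (simp add: large_up_def large_down_def)
  have eX: "?X - {Up k 0} = S (2*k-1) (2*k-2)"
    apply (rule set_eqI) subgoal for x using k by (cases x) (simp_all, (presburger+)?) done
  have X: "num_tilings ?X = N (2*k-1) (2*k-2)"
    unfolding N_def using peel_nbhd[OF finite_S_ins, of "Up k 0"] CX eX by simp
  have "N (2*k+1) (2*k+1) = (\<Sum>t\<in>{{?c}, large_down (k-2) 0}. num_tilings (?R - t))"
    unfolding N_def using peel_nbhd[OF finite_S, of ?c] C k by simp
  also have "\<dots> = N (2*k+1) (2*k) + N (2*k-1) (2*k-2)"
    by (simp add: e1 e2 N_def X)
  finally show ?thesis by simp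
qed

lemma R5b: "N 3 3 = N 3 2"
proof -
  let ?R = "S 3 3" and ?c = "Down 0 1"
  have C: "{t\<in>nbhd ?c. t \<subseteq> ?R} = {{?c}}"
    unfolding nbhd_def cell.case filter5
    by (simp add: large_up_def large_down_def)
  have e1: "?R - {?c} = S 3 2"
    apply (rule set_eqI) subgoal for x by (cases x) (simp_all, (presburger+)?) done
  show ?thesis
    unfolding N_def using peel_nbhd[OF finite_S, of ?c ] C e1 by simp
qed

lemma N11: "N 1 1 = 1"
proof -
  let ?R = "S 1 1" and ?c = "Up 0 0"
  have C: "{t\<in>nbhd ?c. t \<subseteq> ?R} = {{?c}}"
    unfolding nbhd_def cell.case filter5
    by (simp add: large_up_def large_down_def)
  have e1: "?R - {?c} = {}"
    apply (rule set_eqI) subgoal for x by (cases x) (simp_all, (presburger+)?) done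
  have e1': "num_tilings (?R - {?c}) = 1" by (subst e1) (rule tilings_empty)
  show ?thesis
    unfolding N_def using peel_nbhd[OF finite_S, of ?c ] C e1' by simp
qed

lemma N32: "N 3 2 = N 2 2 + 1"
proof -
  let ?R = "S 3 2" and ?c = "Up 1 0"
  have C: "{t\<in>nbhd ?c. t \<subseteq> ?R} = {{?c}, large_up 0 0}"
    unfolding nbhd_def cell.case filter5
    by (simp add: large_up_def large_down_def insert_commute)
  have e1: "?R - {?c} = S 2 2"
    apply (rule set_eqI) subgoal for x by (cases x) (simp_all, (presburger+)?) done
  have e2: "?R - large_up 0 0 = {}"
    apply (rule set_eqI) subgoal for x by (cases x) (simp_all add: large_up_def, (presburger+)?) done
  have e2': "num_tilings (?R - large_up 0 0) = 1" by (subst e2) (rule tilings_empty)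
  show ?thesis
    unfolding N_def using peel_nbhd[OF finite_S, of ?c ] C e1 e2' by simp
qed

lemma smallvals: "N 2 3 = 1" "N 3 2 = 2" "N 3 3 = 2" "N 4 4 = 2" "N 4 5 = 4" "N 5 4 = 3"
proof -
  have n21: "N 2 1 = 1" using R4[of 1] N11 by simp
  have n22: "N 2 2 = 1" using R3[of 1] n21 by simp
  show a: "N 2 3 = 1" using R1b n22 by simp
  show b: "N 3 2 = 2" using N32 n22 by simp
  show c: "N 3 3 = 2" using R5b b by simp
  have "N 4 3 = 2" using R4[of 2] c by simp
  thus d: "N 4 4 = 2" using R3[of 2] by simp
  show "N 4 5 = 4" using R1[of 2] b d by simp
  show "N 5 4 = 3" using R2[of 2] a d by simp
qed



lemma A_N: "m \<ge> 1 \<Longrightarrow> A m = int (N (2*int m) (2*int m+1))"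
proof -
  assume m: "m \<ge> 1"
  have "regionA m = S (2*int m) (2*int m+1)"
    apply (rule set_eqI) subgoal for x by (cases x) (auto simp: regionA_def) done
  thus ?thesis using m by (simp add: A_def N_def)
qed

lemma B_N: "m \<ge> 1 \<Longrightarrow> B m = int (N (2*int m+1) (2*int m))"
proof -
  assume m: "m \<ge> 1"
  have "regionB m = S (2*int m+1) (2*int m)"
    apply (rule set_eqI) subgoal for x by (cases x) (auto simp: regionB_def) done
  thus ?thesis using m by (simp add: B_def N_def)
qed

lemma hA: "A (j+2) = 2 * B (j+1) + B j"
proof (cases j)
  case 0
  have x1: "A 2 = 4" using A_N[of 2] smallvals by simp
  have x2: "B 1 = 2" using B_N[of 1] smallvals by simp
  have x3: "B 0 = 0" by (simp add: B_def)
  show ?thesis using 0 x1 x2 x3 by (simp add: numeral_2_eq_2)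
next
  case (Suc i)
  define k where "k = int i + 3"
  have k2: "k \<ge> 2" "k - 1 \<ge> 2" unfolding k_def by auto
  have 1: "A (j+2) = int (N (2*k) (2*k+1))" using A_N[of "j+2"] Suc by (simp add: k_def algebra_simps)
  have 2: "B (j+1) = int (N (2*(k-1)+1) (2*(k-1)))" using B_N[of "j+1"] Suc by (simp add: k_def algebra_simps)
  have 3: "B j = int (N (2*(k-1)-1) (2*(k-1)-2))" using B_N[of "j"] Suc by (simp add: k_def algebra_simps)
  have r1: "N (2*k) (2*k+1) = N (2*k-1) (2*k-2) + N (2*k) (2*k)" using R1 k2 by blast
  have r3: "N (2*k) (2*k) = N (2*k) (2*k-1)" using R3 k2 by simp
  have r4: "N (2*k) (2*k-1) = N (2*k-1) (2*k-1)" using R4 k2 by simp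
  have r5: "N (2*(k-1)+1) (2*(k-1)+1) = N (2*(k-1)+1) (2*(k-1)) + N (2*(k-1)-1) (2*(k-1)-2)"
    using R5 k2 by blast
  have e: "2*(k-1)+1 = 2*k-1" "2*(k-1) = 2*k-2" by auto
  show ?thesis unfolding 1 2 3 using r1 r3 r4 r5 unfolding e by simp
qed

lemma hB: "B (j+2) = B (j+1) + B j + A (j+1)"
proof (cases j)
  case 0
  have x1: "A 1 = 1" using A_N[of 1] smallvals by simp
  have x2: "B 1 = 2" using B_N[of 1] smallvals by simp
  have x3: "B 0 = 0" by (simp add: B_def)
  have x4: "B 2 = 3" using B_N[of 2] smallvals by simp
  show ?thesis using 0 x1 x2 x3 x4 by (simp add: numeral_2_eq_2)
next
  case (Suc i)
  define k where "k = int i + 3"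
  have k2: "k \<ge> 2" "k - 1 \<ge> 2" unfolding k_def by auto
  have 1: "B (j+2) = int (N (2*k+1) (2*k))" using B_N[of "j+2"] Suc by (simp add: k_def algebra_simps)
  have 2: "B (j+1) = int (N (2*(k-1)+1) (2*(k-1)))" using B_N[of "j+1"] Suc by (simp add: k_def algebra_simps)
  have 3: "B j = int (N (2*(k-1)-1) (2*(k-1)-2))" using B_N[of "j"] Suc by (simp add: k_def algebra_simps)
  have 4: "A (j+1) = int (N (2*k-2) (2*k-1))" using A_N[of "j+1"] Suc by (simp add: k_def algebra_simps)
  have r2: "N (2*k+1) (2*k) = N (2*k) (2*k) + N (2*k-2) (2*k-1)" using R2 k2 by simp
  have r3: "N (2*k) (2*k) = N (2*k) (2*k-1)" using R3 k2 by simp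
  have r4: "N (2*k) (2*k-1) = N (2*k-1) (2*k-1)" using R4 k2 by simp
  have r5: "N (2*(k-1)+1) (2*(k-1)+1) = N (2*(k-1)+1) (2*(k-1)) + N (2*(k-1)-1) (2*(k-1)-2)"
    using R5 k2 by blast
  have e: "2*(k-1)+1 = 2*k-1" "2*(k-1) = 2*k-2" by auto
  show ?thesis unfolding 1 2 3 4 using r2 r3 r4 r5 unfolding e by simp
qed

lemma alg:
  fixes a b :: "nat \<Rightarrow> int"
  assumes ha: "\<And>j. a (j+2) = 2*b (j+1) + b j"
    and hb: "\<And>j. b (j+2) = b (j+1) + b j + a (j+1)"
    and a0: "a 0 = 1" and a1: "a 1 = 1" and b0: "b 0 = 0" and b1: "b 1 = 2"
  shows "a (2*i+4) = 6*a (2*i+2) - a (2*i) - 2 \<and> a (2*i+5) = 6*a (2*i+3) - a (2*i+1) + 2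
    \<and> b (2*i+4) = 6*b (2*i+2) - b (2*i) + 2 \<and> b (2*i+5) = 6*b (2*i+3) - b (2*i+1) - 2"
proof -
  define E where "E j = b (j+2) - 2*b (j+1) - b j" for j
  define F where "F j = a (j+2) - 2*a (j+1) - a j" for j
  have hE: "E (j+1) = - E j" for j
  proof -
    have "b (j+3) = b (j+2) + b (j+1) + a (j+2)" using hb[of "j+1"] by (simp add: numeral_3_eq_3)
    thus ?thesis unfolding E_def using ha[of j] by (simp add: numeral_3_eq_3 algebra_simps)
  qed
  have hF: "F (j+2) = 2*E (j+1) + E j" for j
    unfolding F_def E_def using ha[of "j+2"] ha[of "j+1"] ha[of j]
    by (simp add: numeral_3_eq_3 algebra_simps eval_nat_numeral)
  have b2: "b 2 = 3" using hb[of 0] a1 b0 b1 by (simp add: numeral_2_eq_2)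
  have a2: "a 2 = 4" using ha[of 0] b0 b1 by (simp add: numeral_2_eq_2)
  have a3: "a 3 = 8" using ha[of 1] b1 b2 by (simp add: numeral_3_eq_3 numeral_2_eq_2)
  have E0: "E 0 = -1" unfolding E_def using b0 b1 b2 by (simp add: numeral_2_eq_2)
  have Ealt: "E (2*i) = -1 \<and> E (2*i+1) = 1" for i
  proof (induction i)
    case 0 thus ?case using E0 hE[of 0] by simp
  next
    case (Suc i)
    have "E (2*Suc i) = - E (2*i+1)" using hE[of "2*i+1"] by simp
    moreover have "E (2*Suc i+1) = - E (2*Suc i)" using hE[of "2*Suc i"] by simp
    ultimately show ?case using Suc by simp
  qed
  have Falt: "F (2*i) = 1 \<and> F (2*i+1) = -1" for i
  proof (cases i)
    case 0
    show ?thesis using 0 a0 a1 a2 a3 unfolding F_def by (simp add: numeral_3_eq_3 numeral_2_eq_2)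
  next
    case (Suc m)
    have "F (2*i) = 2*E (2*m+1) + E (2*m)" using hF[of "2*m"] Suc by simp
    moreover have "F (2*i+1) = 2*E (2*m+2) + E (2*m+1)" using hF[of "2*m+1"] Suc by (simp add: algebra_simps)
    moreover have "E (2*m+2) = -1" using Ealt[of "Suc m"] by simp
    ultimately show ?thesis using Ealt[of m] by simp
  qed
  have idb: "b (j+4) - 6*b (j+2) + b j = E (j+2) + 2*E (j+1) - E j" for j
    unfolding E_def by (simp add: eval_nat_numeral algebra_simps)
  have ida: "a (j+4) - 6*a (j+2) + a j = F (j+2) + 2*F (j+1) - F j" for j
    unfolding F_def by (simp add: eval_nat_numeral algebra_simps)
  have E2: "E (2*i+2) = -1" "E (2*i+3) = 1" using Ealt[of "Suc i"] by (simp_all add: numeral_3_eq_3)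
  have F2: "F (2*i+2) = 1" "F (2*i+3) = -1" using Falt[of "Suc i"] by (simp_all add: numeral_3_eq_3)
  have E1: "E (2*i+1+2) = 1" "E(2*i+1+1) = -1" using E2 by (simp_all add: numeral_3_eq_3)
  have F1: "F (2*i+1+2) = -1" "F(2*i+1+1) = 1" using F2 by (simp_all add: numeral_3_eq_3)
  have "a (2*i+4) - 6*a (2*i+2) + a (2*i) = -2" using ida[of "2*i"] Falt[of i] F2 by (simp add: algebra_simps)
  moreover have "a (2*i+1+4) - 6*a (2*i+1+2) + a (2*i+1) = 2" using ida[of "2*i+1"] Falt[of i] F1 by simp
  moreover have "b (2*i+4) - 6*b (2*i+2) + b (2*i) = 2" using idb[of "2*i"] Ealt[of i] E2 by (simp add: algebra_simps)
  moreover have "b (2*i+1+4) - 6*b (2*i+1+2) + b (2*i+1) = -2" using idb[of "2*i+1"] Ealt[of i] E1 by simp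
  ultimately show ?thesis by (simp add: algebra_simps eval_nat_numeral)
qed

theorem mainTheorem4:
  fixes n :: nat
  assumes "n \<ge> 2"
  shows "A (2*n) = 6 * A (2*n-2) - A (2*n-4) - 2
       \<and> A (2*n+1) = 6 * A (2*n-1) - A (2*n-3) + 2
       \<and> B (2*n) = 6 * B (2*n-2) - B (2*n-4) + 2
       \<and> B (2*n+1) = 6 * B (2*n-1) - B (2*n-3) - 2"
proof -
  obtain i where i: "n = i + 2" using assms by (metis add.commute le_Suc_ex)
  have a0: "A 0 = 1" "B 0 = 0" by (simp_all add: A_def B_def)
  have a1: "A 1 = 1" "B 1 = 2" using A_N[of 1] B_N[of 1] smallvals by simp_all
  have H: "A (2*i+4) = 6*A (2*i+2) - A (2*i) - 2 \<and> A (2*i+5) = 6*A (2*i+3) - A (2*i+1) + 2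
    \<and> B (2*i+4) = 6*B (2*i+2) - B (2*i) + 2 \<and> B (2*i+5) = 6*B (2*i+3) - B (2*i+1) - 2"
    by (rule alg[OF hA hB a0(1) a1(1) a0(2) a1(2)])
  have t: "A (2*n) = A (2*i+4)" "A (2*n-2) = A (2*i+2)" "A (2*n-4) = A (2*i)"
     "A (2*n+1) = A (2*i+5)" "A (2*n-1) = A (2*i+3)" "A (2*n-3) = A (2*i+1)"
     "B (2*n) = B (2*i+4)" "B (2*n-2) = B (2*i+2)" "B (2*n-4) = B (2*i)"
     "B (2*n+1) = B (2*i+5)" "B (2*n-1) = B (2*i+3)" "B (2*n-3) = B (2*i+1)"
    using i by (auto intro!: arg_cong[where f=A] arg_cong[where f=B])
  show ?thesis unfolding t by (rule H)
qed


end
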